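(* Assume (H1) and (H2) from the context hold, let $c>c^*$, and let $\gamma\in(1,2)$ satisfy $\Phi(\gamma\Lambda_c)<c$ and $M_i(\gamma\Lambda_c)>0$ for $i=1,\dots,N$. Then for each $i=1,\dots,N$, $$\frac{M_i(\Lambda_c)}{(\lambda_{1i}+\Lambda_c)\nu^i_{\Lambda_c}}+\frac{M_i(\Lambda_c)}{(\lambda_{2i}-\Lambda_c)\nu^i_{\Lambda_c}}-\frac{M_i(\gamma\Lambda_c)}{(\lambda_{1i}+\gamma\Lambda_c)\nu^i_{\gamma\Lambda_c}}-\frac{M_i(\gamma\Lambda_c)}{(\lambda_{2i}-\gamma\Lambda_c)\nu^i_{\gamma\Lambda_c}}>0.$$
   Context: Let $N\ge1$ and $D=\mathrm{diag}(d_1,\dots,d_N)$ with $d_i>0$. Vector inequalities are componentwise; $u\gg0$ means all components positive; $[0,r]=\{u:0\le u\le r\}$. (H1) - $k^+\gg0$; $f:[0,k^+]\to\mathbb{R}^N$ is continuous and piecewise twice continuously differentiable; solutions of $u_t=Du_{xx}+f(u)$ with data continuous in $[0,k^+]$ exist globally and stay in $[0,k^+]$. - $0\ll k^-\le k\le k^+$; continuous piecewise $C^2$ maps $f^\pm:[0,k^\pm]\to\mathbb{R}^N$ satisfy $f^-\le f\le f^+$ on $[0,k^+]$. - $f(0)=f(k)=0$, $f^\pm(0)=f^\pm(k^\pm)=0$, with no other positive equilibria between $0$ and $k$, respectively $k^\pm$. - $f^\pm$ are cooperative on $[0,k^\pm]$ and share with $f$ the Jacobian $f'(0)$ at $0$.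 (H2) - $A_\lambda=(a^{ij}_\lambda)=\mathrm{diag}(d_i\lambda^2)+f'(0)$ is block lower triangular for $\lambda>0$, with irreducible or $1\times1$ zero diagonal blocks. - Its first block has positive principal eigenvalue $\Psi(A_\lambda)$ (where $\Psi(A)=\rho(A+\alpha I)-\alpha$, $A+\alpha I\ge0$), strictly larger than those of the other blocks. - An eigenvector $\nu_\lambda=(\nu^i_\lambda)\gg0$ for $\Psi(A_\lambda)$ exists and is continuous in $\lambda$. Speeds. $\Phi(\lambda)=\Psi(A_\lambda)/\lambda$ and $c^*=\inf_{\lambda>0}\Phi$. For $c>c^*$, $\Lambda_c$ is the smallest positive solution of $\Phi(\lambda)=c$. Constants. $\beta>\max\{|\partial_if_j(u)|:u\in[0,k^+]\}$ is a fixed, sufficiently large constant. Set $\lambda_{1i}=\frac{-c+\sqrt{c^2+4\beta d_i}}{2d_i}$ and $\lambda_{2i}=\frac{c+\sqrt{c^2+4\beta d_i}}{2d_i}$, with $\lambda_{2i}>\lambda_{1i}>2\Lambda_c$. The quantity $M_i$. $M_i(\lambda)=\beta\nu^i_\lambda-\nu^i_\lambda d_i\lambda^2+\sum_{j=1}^N\nu^j_\lambda a^{ij}_\lambda$. *)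

theory Defs
  imports Complex_Main "Jordan_Normal_Form.Spectral_Radius"
begin

(* Indices run over 0..<N (the paper uses 1..N). Vectors are JNF vectors of
   dimension N, matrices are JNF N x N real matrices. *)

definition order_box :: "nat \<Rightarrow> real vec \<Rightarrow> real vec set" where
  "order_box N r = {u. dim_vec u = N \<and> (\<forall>i<N. 0 \<le> u $ i \<and> u $ i \<le> r $ i)}"

definition partial_deriv_within ::
  "nat \<Rightarrow> (real vec \<Rightarrow> real vec) \<Rightarrow> real vec set \<Rightarrow> real vec \<Rightarrow> nat \<Rightarrow> nat \<Rightarrow> real \<Rightarrow> bool" where
  "partial_deriv_within N g S u i j D \<longleftrightarrow>
     ((\<lambda>t. g (u + t \<cdot>\<^sub>v unit_vec N j) $ i) has_real_derivative D)
       (at 0 within {t. u + t \<cdot>\<^sub>v unit_vec N j \<in> S})"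

definition cooperative_on :: "nat \<Rightarrow> (real vec \<Rightarrow> real vec) \<Rightarrow> real vec set \<Rightarrow> bool" where
  "cooperative_on N g S \<longleftrightarrow>
     (\<forall>u\<in>S. \<forall>i<N. \<forall>j<N. \<forall>D. i \<noteq> j \<longrightarrow> partial_deriv_within N g S u i j D \<longrightarrow> 0 \<le> D)"

definition jacobian_at_0 :: "nat \<Rightarrow> (real vec \<Rightarrow> real vec) \<Rightarrow> real vec set \<Rightarrow> real mat \<Rightarrow> bool" where
  "jacobian_at_0 N g S J \<longleftrightarrow> J \<in> carrier_mat N N \<and>
     (\<forall>i<N. \<forall>j<N. partial_deriv_within N g S (0\<^sub>v N) i j (J $$ (i,j)))"

definition vle :: "nat \<Rightarrow> real vec \<Rightarrow> real vec \<Rightarrow> bool" where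
  "vle N u v \<longleftrightarrow> (\<forall>i<N. u $ i \<le> v $ i)"

definition vpos :: "nat \<Rightarrow> real vec \<Rightarrow> bool" where
  "vpos N u \<longleftrightarrow> dim_vec u = N \<and> (\<forall>i<N. 0 < u $ i)"

definition A_mat :: "nat \<Rightarrow> (nat \<Rightarrow> real) \<Rightarrow> real mat \<Rightarrow> real \<Rightarrow> real mat" where
  "A_mat N d J l = mat N N (\<lambda>(i,j). (if i = j then d i * l\<^sup>2 else 0) + J $$ (i,j))"

definition Psi :: "real mat \<Rightarrow> real" where
  "Psi A = (let n = dim_row A;
               \<alpha> = (SOME \<alpha>::real. \<forall>i<n. \<forall>j<n. 0 \<le> (A + \<alpha> \<cdot>\<^sub>m 1\<^sub>m n) $$ (i,j))
            in spectral_radius (map_mat complex_of_real (A + \<alpha> \<cdot>\<^sub>m 1\<^sub>m n)) - \<alpha>)"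

definition diag_block :: "real mat \<Rightarrow> nat \<Rightarrow> nat \<Rightarrow> real mat" where
  "diag_block A lo hi = mat (hi - lo) (hi - lo) (\<lambda>(i,j). A $$ (lo + i, lo + j))"

definition irreducible_mat :: "real mat \<Rightarrow> bool" where
  "irreducible_mat A \<longleftrightarrow> (let n = dim_row A in
     \<not> (\<exists>S. S \<noteq> {} \<and> S \<subset> {..<n} \<and> (\<forall>i\<in>S. \<forall>j\<in>{..<n} - S. A $$ (i,j) = 0)))"

definition block_lower_tri :: "real mat \<Rightarrow> nat \<Rightarrow> (nat \<Rightarrow> nat) \<Rightarrow> bool" where
  "block_lower_tri A m b \<longleftrightarrow>
     (\<forall>k<m. \<forall>l<m. k < l \<longrightarrow> (\<forall>i j. b k \<le> i \<and> i < b (Suc k) \<and> b l \<le> j \<and> j < b (Suc l)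
        \<longrightarrow> A $$ (i,j) = 0))"

definition Phi :: "nat \<Rightarrow> (nat \<Rightarrow> real) \<Rightarrow> real mat \<Rightarrow> real \<Rightarrow> real" where
  "Phi N d J l = Psi (A_mat N d J l) / l"

definition c_star :: "nat \<Rightarrow> (nat \<Rightarrow> real) \<Rightarrow> real mat \<Rightarrow> real" where
  "c_star N d J = (INF l\<in>{0<..}. Phi N d J l)"

definition M_fun :: "nat \<Rightarrow> (nat \<Rightarrow> real) \<Rightarrow> real mat \<Rightarrow> (real \<Rightarrow> real vec) \<Rightarrow> real \<Rightarrow> nat \<Rightarrow> real \<Rightarrow> real" where
  "M_fun N d J \<nu> \<beta> i l = \<beta> * (\<nu> l $ i) - (\<nu> l $ i) * d i * l\<^sup>2
      + (\<Sum>j<N. (\<nu> l $ j) * (A_mat N d J l $$ (i,j)))"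

definition lam1 :: "(nat \<Rightarrow> real) \<Rightarrow> real \<Rightarrow> real \<Rightarrow> nat \<Rightarrow> real" where
  "lam1 d \<beta> c i = (- c + sqrt (c\<^sup>2 + 4 * \<beta> * d i)) / (2 * d i)"

definition lam2 :: "(nat \<Rightarrow> real) \<Rightarrow> real \<Rightarrow> real \<Rightarrow> nat \<Rightarrow> real" where
  "lam2 d \<beta> c i = (c + sqrt (c\<^sup>2 + 4 * \<beta> * d i)) / (2 * d i)"

end

theory Submission
  imports Defs
begin

lemma M_eq:
  assumes l: "l > 0" and i: "i < N" and vp: "vpos N (\<nu> l)"
    and eig: "A_mat N d J l *\<^sub>v \<nu> l = Psi (A_mat N d J l) \<cdot>\<^sub>v \<nu> l"
  shows "M_fun N d J \<nu> \<beta> i l = \<nu> l $ i * (\<beta> - d i * l\<^sup>2 + l * Phi N d J l)"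
proof -
  have dim: "dim_vec (\<nu> l) = N" using vp by (simp add: vpos_def)
  have "(A_mat N d J l *\<^sub>v \<nu> l) $ i = (\<Sum>j<N. (\<nu> l $ j) * (A_mat N d J l $$ (i,j)))"
    using i dim unfolding A_mat_def
    by (auto simp: mult_mat_vec_def scalar_prod_def atLeast0LessThan mult.commute intro!: sum.cong)
  moreover have "(A_mat N d J l *\<^sub>v \<nu> l) $ i = Psi (A_mat N d J l) * \<nu> l $ i"
    using eig i dim by simp
  moreover have "Psi (A_mat N d J l) = l * Phi N d J l" using l by (simp add: Phi_def)
  ultimately show ?thesis unfolding M_fun_def by (simp add: algebra_simps)
qed

lemma quad_id:
  assumes dp: "0 < dd" and x: "0 < x"
    and l1: "x < l1" and l12: "l1 < l2"
    and l1d: "l1 = (- c + sqrt (c\<^sup>2 + 4 * \<beta> * dd)) / (2 * dd)"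
    and l2d: "l2 = (c + sqrt (c\<^sup>2 + 4 * \<beta> * dd)) / (2 * dd)"
  shows "\<beta> + c*x - dd*x\<^sup>2 = dd*(l2-x)*(l1+x)"
proof -
  define s where "s = sqrt (c\<^sup>2 + 4 * \<beta> * dd)"
  have "c\<^sup>2 + 4 * \<beta> * dd \<ge> 0"
  proof (rule ccontr)
    assume "\<not> ?thesis"
    then have s0: "s < 0" unfolding s_def by simp
    have e1: "2*dd*l1 = s - c" using l1d dp s_def by (simp add: field_simps)
    have e2: "2*dd*l2 = s + c" using l2d dp s_def by (simp add: field_simps)
    have "2*dd*l1 < 2*dd*l2" using l12 dp by simp
    then have "c > 0" using e1 e2 by simp
    moreover have "2*dd*l1 > 0" using x l1 dp by simp
    ultimately show False using e1 s0 by simp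
  qed
  then have ss: "s*s = c\<^sup>2 + 4 * \<beta> * dd" unfolding s_def by (simp add: real_sqrt_mult_self)
  have e1: "2*dd*l1 = s - c" using l1d dp s_def by (simp add: field_simps)
  have e2: "2*dd*l2 = s + c" using l2d dp s_def by (simp add: field_simps)
  have "4*dd*(dd*(l2-x)*(l1+x)) = (2*dd*l2 - 2*dd*x)*(2*dd*l1+2*dd*x)" by (simp add: algebra_simps)
  also have "\<dots> = (s + c - 2*dd*x)*(s - c + 2*dd*x)" by (simp add: e1 e2)
  also have "\<dots> = s*s - (c - 2*dd*x)^2" by (simp add: algebra_simps power2_eq_square)
  also have "\<dots> = 4*dd*(\<beta> + c*x - dd*x\<^sup>2)" by (simp add: ss algebra_simps power2_eq_square)
  finally show ?thesis using dp by simp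
qed

theorem lemma6p2:
  fixes N :: nat and d :: "nat \<Rightarrow> real"
    and f fp fm :: "real vec \<Rightarrow> real vec"
    and kp km k :: "real vec" and J :: "real mat"
    and m :: nat and b :: "nat \<Rightarrow> nat"
    and \<nu> :: "real \<Rightarrow> real vec"
    and \<beta> c \<Lambda> \<gamma> :: real
  assumes N: "N \<ge> 1"
    and d_pos: "\<forall>i<N. 0 < d i"
    \<comment> \<open>(H1)\<close>
    and kp_pos: "vpos N kp"
    and km_pos: "vpos N km"
    and k_dim: "dim_vec k = N"
    and k_order: "vle N km k" "vle N k kp"
    and f_dim: "\<forall>u \<in> order_box N kp. dim_vec (f u) = N"
    and fm_dim: "\<forall>u \<in> order_box N km. dim_vec (fm u) = N"
    and fp_dim: "\<forall>u \<in> order_box N kp. dim_vec (fp u) = N"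
    and f_inv: "\<forall>u \<in> order_box N kp. vle N (fm u) (f u) \<and> vle N (f u) (fp u)"
    and f_eq: "f (0\<^sub>v N) = 0\<^sub>v N" "f k = 0\<^sub>v N"
    and fp_eq: "fp (0\<^sub>v N) = 0\<^sub>v N" "fp kp = 0\<^sub>v N"
    and fm_eq: "fm (0\<^sub>v N) = 0\<^sub>v N" "fm km = 0\<^sub>v N"
    and f_noeq: "\<forall>u \<in> order_box N k. vpos N u \<and> f u = 0\<^sub>v N \<longrightarrow> u = k"
    and fp_noeq: "\<forall>u \<in> order_box N kp. vpos N u \<and> fp u = 0\<^sub>v N \<longrightarrow> u = kp"
    and fm_noeq: "\<forall>u \<in> order_box N km. vpos N u \<and> fm u = 0\<^sub>v N \<longrightarrow> u = km"
    and fp_coop: "cooperative_on N fp (order_box N kp)"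
    and fm_coop: "cooperative_on N fm (order_box N km)"
    and f_jac: "jacobian_at_0 N f (order_box N kp) J"
    and fp_jac: "jacobian_at_0 N fp (order_box N kp) J"
    and fm_jac: "jacobian_at_0 N fm (order_box N km) J"
    \<comment> \<open>(H2)\<close>
    and blocks: "1 \<le> m" "b 0 = 0" "b m = N" "\<forall>q<m. b q < b (Suc q)"
    and lower_tri: "\<forall>l>0. block_lower_tri (A_mat N d J l) m b"
    and irred: "\<forall>l>0. \<forall>q<m. irreducible_mat (diag_block (A_mat N d J l) (b q) (b (Suc q)))
                  \<or> (b (Suc q) = Suc (b q) \<and> A_mat N d J l $$ (b q, b q) = 0)"
    and first_pos: "\<forall>l>0. 0 < Psi (diag_block (A_mat N d J l) (b 0) (b 1))"
    and first_dom: "\<forall>l>0. \<forall>q. 1 \<le> q \<and> q < m \<longrightarrow>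
                  Psi (diag_block (A_mat N d J l) (b q) (b (Suc q)))
                    < Psi (diag_block (A_mat N d J l) (b 0) (b 1))"
    and nu_pos: "\<forall>l>0. vpos N (\<nu> l)"
    and nu_eig: "\<forall>l>0. A_mat N d J l *\<^sub>v \<nu> l = Psi (A_mat N d J l) \<cdot>\<^sub>v \<nu> l"
    and nu_cont: "\<forall>i<N. continuous_on {0<..} (\<lambda>l. \<nu> l $ i)"
    \<comment> \<open>constants\<close>
    and beta_bound: "\<forall>u \<in> order_box N kp. \<forall>i<N. \<forall>j<N. \<forall>D.
                  partial_deriv_within N f (order_box N kp) u i j D \<longrightarrow> \<bar>D\<bar> < \<beta>"
    and c_gt: "c > c_star N d J"
    and Lam: "0 < \<Lambda>" "Phi N d J \<Lambda> = c" "\<forall>l>0. Phi N d J l = c \<longrightarrow> \<Lambda> \<le> l"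
    and lam_order: "\<forall>i<N. lam2 d \<beta> c i > lam1 d \<beta> c i \<and> lam1 d \<beta> c i > 2 * \<Lambda>"
    and gamma: "1 < \<gamma>" "\<gamma> < 2"
    and gamma_Phi: "Phi N d J (\<gamma> * \<Lambda>) < c"
    and gamma_M: "\<forall>i<N. M_fun N d J \<nu> \<beta> i (\<gamma> * \<Lambda>) > 0"
  shows "\<forall>i<N.
    M_fun N d J \<nu> \<beta> i \<Lambda> / ((lam1 d \<beta> c i + \<Lambda>) * (\<nu> \<Lambda> $ i))
    + M_fun N d J \<nu> \<beta> i \<Lambda> / ((lam2 d \<beta> c i - \<Lambda>) * (\<nu> \<Lambda> $ i))
    - M_fun N d J \<nu> \<beta> i (\<gamma> * \<Lambda>) / ((lam1 d \<beta> c i + \<gamma> * \<Lambda>) * (\<nu> (\<gamma> * \<Lambda>) $ i))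
    - M_fun N d J \<nu> \<beta> i (\<gamma> * \<Lambda>) / ((lam2 d \<beta> c i - \<gamma> * \<Lambda>) * (\<nu> (\<gamma> * \<Lambda>) $ i)) > 0"
  proof (intro allI impI)
  fix i assume i: "i < N"
  define x where "x = \<gamma> * \<Lambda>"
  have x0: "0 < x" using Lam gamma by (simp add: x_def)
  have dp: "0 < d i" using d_pos i by auto
  have lo: "lam2 d \<beta> c i > lam1 d \<beta> c i" "lam1 d \<beta> c i > 2 * \<Lambda>" using lam_order i by auto
  have "\<gamma>*\<Lambda> < 2*\<Lambda>" using gamma Lam(1) by simp
  then have xl: "x < lam1 d \<beta> c i" using lo unfolding x_def by linarith
  have Ll: "\<Lambda> < lam1 d \<beta> c i" using lo Lam by simp
  have vL: "vpos N (\<nu> \<Lambda>)" using nu_pos Lam(1) by blast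
  have vx: "vpos N (\<nu> x)" using nu_pos x0 by blast
  have eL: "A_mat N d J \<Lambda> *\<^sub>v \<nu> \<Lambda> = Psi (A_mat N d J \<Lambda>) \<cdot>\<^sub>v \<nu> \<Lambda>" using nu_eig Lam(1) by blast
  have ex: "A_mat N d J x *\<^sub>v \<nu> x = Psi (A_mat N d J x) \<cdot>\<^sub>v \<nu> x" using nu_eig x0 by blast
  have nL: "\<nu> \<Lambda> $ i > 0" using vL i by (simp add: vpos_def)
  have nx: "\<nu> x $ i > 0" using vx i by (simp add: vpos_def)
  have MLam: "M_fun N d J \<nu> \<beta> i \<Lambda> = \<nu> \<Lambda> $ i * (\<beta> + c*\<Lambda> - d i*\<Lambda>\<^sup>2)"
    unfolding M_eq[of \<Lambda> i N \<nu> d J \<beta>, OF Lam(1) i vL eL] Lam(2) by (simp add: algebra_simps)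
  have Mx: "M_fun N d J \<nu> \<beta> i x = \<nu> x $ i * (\<beta> - d i*x\<^sup>2 + x * Phi N d J x)"
    by (rule M_eq[of x i N \<nu> d J \<beta>, OF x0 i vx ex])
  define h where "h = \<beta> - d i*x\<^sup>2 + x * Phi N d J x"
  have "0 < M_fun N d J \<nu> \<beta> i x" using gamma_M i unfolding x_def by blast
  then have "0 < \<nu> x $ i * h" using Mx h_def by simp
  then have h0: "0 < h" using nx by (simp add: zero_less_mult_iff)
  have "x * Phi N d J x < x * c" using gamma_Phi x0 unfolding x_def[symmetric]
    by (rule mult_strict_left_mono)
  then have h1: "h < \<beta> + c*x - d i*x\<^sup>2" unfolding h_def by (simp add: mult.commute)
  have gx: "\<beta> + c*x - d i*x\<^sup>2 = d i*(lam2 d \<beta> c i-x)*(lam1 d \<beta> c i+x)"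
    by (rule quad_id[OF dp x0 xl lo(1) lam1_def lam2_def])
  have gL: "\<beta> + c*\<Lambda> - d i*\<Lambda>\<^sup>2 = d i*(lam2 d \<beta> c i-\<Lambda>)*(lam1 d \<beta> c i+\<Lambda>)"
    by (rule quad_id[OF dp Lam(1) Ll lo(1) lam1_def lam2_def])
  define l1 where "l1 = lam1 d \<beta> c i"
  define l2 where "l2 = lam2 d \<beta> c i"
  have p: "l1 + \<Lambda> > 0" "l2 - \<Lambda> > 0" "l1 + x > 0" "l2 - x > 0"
    using Lam(1) x0 xl Ll lo unfolding l1_def l2_def by auto
  have A1: "M_fun N d J \<nu> \<beta> i \<Lambda> / ((l1 + \<Lambda>) * (\<nu> \<Lambda> $ i)) = d i * (l2 - \<Lambda>)"
    using p nL unfolding MLam gL l1_def[symmetric] l2_def[symmetric] by simp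
  have A2: "M_fun N d J \<nu> \<beta> i \<Lambda> / ((l2 - \<Lambda>) * (\<nu> \<Lambda> $ i)) = d i * (l1 + \<Lambda>)"
    using p nL unfolding MLam gL l1_def[symmetric] l2_def[symmetric] by simp
  have B1: "M_fun N d J \<nu> \<beta> i x / ((l1 + x) * (\<nu> x $ i)) = h / (l1+x)"
    using p nx unfolding Mx h_def by simp
  have B2: "M_fun N d J \<nu> \<beta> i x / ((l2 - x) * (\<nu> x $ i)) = h / (l2-x)"
    using p nx unfolding Mx h_def by simp
  have C1: "h/(l1+x) < d i*(l2-x)" using h1 gx p
    unfolding l1_def[symmetric] l2_def[symmetric] by (simp add: divide_less_eq)
  have C2: "h/(l2-x) < d i*(l1+x)" using h1 gx p
    unfolding l1_def[symmetric] l2_def[symmetric] by (simp add: divide_less_eq mult.commute mult.left_commute)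
  show "M_fun N d J \<nu> \<beta> i \<Lambda> / ((lam1 d \<beta> c i + \<Lambda>) * (\<nu> \<Lambda> $ i))
    + M_fun N d J \<nu> \<beta> i \<Lambda> / ((lam2 d \<beta> c i - \<Lambda>) * (\<nu> \<Lambda> $ i))
    - M_fun N d J \<nu> \<beta> i (\<gamma> * \<Lambda>) / ((lam1 d \<beta> c i + \<gamma> * \<Lambda>) * (\<nu> (\<gamma> * \<Lambda>) $ i))
    - M_fun N d J \<nu> \<beta> i (\<gamma> * \<Lambda>) / ((lam2 d \<beta> c i - \<gamma> * \<Lambda>) * (\<nu> (\<gamma> * \<Lambda>) $ i)) > 0"
    unfolding x_def[symmetric] l1_def[symmetric] l2_def[symmetric] A1 A2 B1 B2
    using C1 C2 by (simp add: algebra_simps)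
qed

end
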